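(* Let $A$ be a real $n\times n$ matrix and let $J$ be an $n\times n$ Jordan form matrix similar to $A$. Fix a step size $h>0$, parameters $\psi=\psi(h)$, $\phi=\phi(h)$, an integer $s\ge 2$ and real constants $\alpha_2,\dots,\alpha_s$, $\theta_1,\dots,\theta_s$. For a matrix $M$ consider the following three difference schemes for $\mathbf{v}'=M\mathbf{v}$: (S1) $\dfrac{\mathbf{v}_{k+1}-\psi\mathbf{v}_k}{\phi}=M\mathbf{v}_k+\sum_{m=2}^{s}\alpha_m\phi^{m-1}M^m\mathbf{v}_k$; (S2) $\dfrac{\mathbf{v}_{k+1}-\psi\mathbf{v}_k}{\phi}=M\mathbf{v}_{k+1}+\sum_{m=2}^{s}\alpha_m\phi^{m-1}M^m\mathbf{v}_{k+1}$; (S3) $\dfrac{\mathbf{v}_{k+1}-\psi\mathbf{v}_k}{\phi}=M\big[\theta_1\mathbf{v}_k+(1-\theta_1)\mathbf{v}_{k+1}\big]+\sum_{m=2}^{s}\alpha_m\phi^{m-1}M^m\big[\theta_m\mathbf{v}_k+(1-\theta_m)\mathbf{v}_{k+1}\big]$. If one of these schemes, with $M=J$, is exact for the system $\mathbf{u}'=J\mathbf{u}$, then the same scheme with the same parameters and $M=A$ is exact for the system $\mathbf{x}'=A\mathbf{x}$.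
   Context: A one-step difference scheme with step size $h>0$ for an autonomous linear system $\mathbf{x}'=M\mathbf{x}$ generates, from an initial vector $\mathbf{x}_0$, a sequence $(\mathbf{x}_k)_{k\ge 0}$ (for implicit schemes it is assumed that $\mathbf{x}_{k+1}$ is uniquely determined by $\mathbf{x}_k$). The scheme is called exact if for every initial vector $\mathbf{x}_0$ the generated sequence satisfies $\mathbf{x}_k=\mathbf{x}(kh)$ for all $k\ge 0$, where $\mathbf{x}(t)$ is the solution of $\mathbf{x}'=M\mathbf{x}$ with $\mathbf{x}(0)=\mathbf{x}_0$. In the paper $\psi(h)=1+\mathcal{O}(h^2)$, $\phi(h)=h+\mathcal{O}(h^2)$. *)

theory Defs
  imports Complex_Main "Jordan_Normal_Form.Jordan_Normal_Form"
begin

datatype scheme = S1 | S2 | S3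

text \<open>One step of a scheme for v' = M v: the relation between v_k (= x) and v_(k+1) (= y),
  written componentwise.  psi, phi are the scalar parameters, s the order,
  al m = alpha_m (m = 2..s), th m = theta_m (m = 1..s).\<close>
definition scheme_step ::
  "scheme \<Rightarrow> nat \<Rightarrow> real \<Rightarrow> real \<Rightarrow> nat \<Rightarrow> (nat \<Rightarrow> real) \<Rightarrow> (nat \<Rightarrow> real) \<Rightarrow>
   'a::real_normed_field mat \<Rightarrow> 'a vec \<Rightarrow> 'a vec \<Rightarrow> bool" where
  "scheme_step S n psi phi s al th M x y \<longleftrightarrow>
     dim_vec y = n \<and>
     (\<forall>i<n. (y $ i - of_real psi * x $ i) / of_real phi =
        (case S of
          S1 \<Rightarrow> (M *\<^sub>v x) $ i +
                (\<Sum>m = 2..s. of_real (al m * phi ^ (m - 1)) * ((M ^\<^sub>m m) *\<^sub>v x) $ i)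
        | S2 \<Rightarrow> (M *\<^sub>v y) $ i +
                (\<Sum>m = 2..s. of_real (al m * phi ^ (m - 1)) * ((M ^\<^sub>m m) *\<^sub>v y) $ i)
        | S3 \<Rightarrow> (M *\<^sub>v (of_real (th 1) \<cdot>\<^sub>v x + of_real (1 - th 1) \<cdot>\<^sub>v y)) $ i +
                (\<Sum>m = 2..s. of_real (al m * phi ^ (m - 1)) *
                   ((M ^\<^sub>m m) *\<^sub>v (of_real (th m) \<cdot>\<^sub>v x + of_real (1 - th m) \<cdot>\<^sub>v y)) $ i)))"

definition ode_solution :: "nat \<Rightarrow> 'a::real_normed_field mat \<Rightarrow> 'a vec \<Rightarrow> (real \<Rightarrow> 'a vec) \<Rightarrow> bool" where
  "ode_solution n M x0 u \<longleftrightarrow> u 0 = x0 \<and>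
     (\<forall>t. dim_vec (u t) = n \<and>
        (\<forall>i<n. ((\<lambda>t. u t $ i) has_vector_derivative (M *\<^sub>v u t) $ i) (at t)))"

definition exact_scheme ::
  "scheme \<Rightarrow> nat \<Rightarrow> real \<Rightarrow> real \<Rightarrow> nat \<Rightarrow> (nat \<Rightarrow> real) \<Rightarrow> (nat \<Rightarrow> real) \<Rightarrow> real \<Rightarrow>
   'a::real_normed_field mat \<Rightarrow> bool" where
  "exact_scheme S n psi phi s al th h M \<longleftrightarrow>
     (\<forall>x. dim_vec x = n \<longrightarrow> (\<exists>!y. scheme_step S n psi phi s al th M x y)) \<and>
     (\<forall>v. dim_vec (v 0) = n \<and> (\<forall>k. scheme_step S n psi phi s al th M (v k) (v (Suc k))) \<longrightarrow>
        (\<forall>u. ode_solution n M (v 0) u \<longrightarrow> (\<forall>k. v k = u (real k * h))))"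

end

theory Submission
  imports Defs
begin

definition lhsf :: "real \<Rightarrow> real \<Rightarrow> 'a::real_normed_field vec \<Rightarrow> 'a vec \<Rightarrow> nat \<Rightarrow> 'a" where
  "lhsf psi phi x y i = (y $ i - of_real psi * x $ i) / of_real phi"

definition rhsf :: "scheme \<Rightarrow> nat \<Rightarrow> (nat \<Rightarrow> real) \<Rightarrow> (nat \<Rightarrow> real) \<Rightarrow> real \<Rightarrow>
   'a::real_normed_field mat \<Rightarrow> 'a vec \<Rightarrow> 'a vec \<Rightarrow> nat \<Rightarrow> 'a" where
  "rhsf S s al th phi M x y i =
        (case S of
          S1 \<Rightarrow> (M *\<^sub>v x) $ i +
                (\<Sum>m = 2..s. of_real (al m * phi ^ (m - 1)) * ((M ^\<^sub>m m) *\<^sub>v x) $ i)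
        | S2 \<Rightarrow> (M *\<^sub>v y) $ i +
                (\<Sum>m = 2..s. of_real (al m * phi ^ (m - 1)) * ((M ^\<^sub>m m) *\<^sub>v y) $ i)
        | S3 \<Rightarrow> (M *\<^sub>v (of_real (th 1) \<cdot>\<^sub>v x + of_real (1 - th 1) \<cdot>\<^sub>v y)) $ i +
                (\<Sum>m = 2..s. of_real (al m * phi ^ (m - 1)) *
                   ((M ^\<^sub>m m) *\<^sub>v (of_real (th m) \<cdot>\<^sub>v x + of_real (1 - th m) \<cdot>\<^sub>v y)) $ i))"

lemma step_iff:
  "scheme_step S n psi phi s al th M x y \<longleftrightarrow>
     dim_vec y = n \<and> (\<forall>i<n. lhsf psi phi x y i = rhsf S s al th phi M x y i)"
  by (simp add: scheme_step_def lhsf_def rhsf_def)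

lemma mv_index:
  assumes "P \<in> carrier_mat n n" "dim_vec v = n" "i < n"
  shows "(P *\<^sub>v v) $ i = (\<Sum>j<n. P $$ (i, j) * v $ j)"
  using assms by (simp add: scalar_prod_def atLeast0LessThan)

lemma conj_pow:
  fixes M P Q :: "'a::field mat"
  assumes P: "P \<in> carrier_mat n n" and Q: "Q \<in> carrier_mat n n" and M: "M \<in> carrier_mat n n"
    and QP: "Q * P = 1\<^sub>m n" and PQ: "P * Q = 1\<^sub>m n" and w: "dim_vec w = n"
  shows "(P * M * Q) ^\<^sub>m m *\<^sub>v (P *\<^sub>v w) = P *\<^sub>v (M ^\<^sub>m m *\<^sub>v w)"
proof -
  have X1: "P * M * Q \<in> carrier_mat n n" by (rule mult_carrier_mat[OF mult_carrier_mat[OF P M] Q])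
  have dr: "dim_row (P * M * Q) = n" using X1 by (rule carrier_matD(1))
  have wit: "similar_mat_wit (P * M * Q) M P Q"
    unfolding similar_mat_wit_def Let_def dr using X1 P Q M QP PQ by blast
  have pw: "(P * M * Q) ^\<^sub>m m = P * M ^\<^sub>m m * Q"
    by (rule similar_mat_wit_pow_id[OF wit])
  have Mm: "M ^\<^sub>m m \<in> carrier_mat n n" using M by (rule pow_carrier_mat)
  have wc: "w \<in> carrier_vec n" using w by (rule carrier_vecI)
  have X: "P * M ^\<^sub>m m * Q \<in> carrier_mat n n" by (rule mult_carrier_mat[OF mult_carrier_mat[OF P Mm] Q])
  have "P * M ^\<^sub>m m * Q *\<^sub>v (P *\<^sub>v w) = (P * M ^\<^sub>m m * Q * P) *\<^sub>v w"
    by (rule assoc_mult_mat_vec[OF X P wc, symmetric])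
  also have "P * M ^\<^sub>m m * Q * P = P * M ^\<^sub>m m * (Q * P)"
    by (rule assoc_mult_mat[OF mult_carrier_mat[OF P Mm] Q P])
  also have "\<dots> = P * M ^\<^sub>m m" unfolding QP by (rule right_mult_one_mat[OF mult_carrier_mat[OF P Mm]])
  also have "(P * M ^\<^sub>m m) *\<^sub>v w = P *\<^sub>v (M ^\<^sub>m m *\<^sub>v w)"
    by (rule assoc_mult_mat_vec[OF P Mm wc])
  finally show ?thesis by (simp only: pw)
qed

lemma conj_one:
  fixes M P Q :: "'a::field mat"
  assumes P: "P \<in> carrier_mat n n" and Q: "Q \<in> carrier_mat n n" and M: "M \<in> carrier_mat n n"
    and QP: "Q * P = 1\<^sub>m n" and PQ: "P * Q = 1\<^sub>m n" and w: "dim_vec w = n"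
  shows "(P * M * Q) *\<^sub>v (P *\<^sub>v w) = P *\<^sub>v (M *\<^sub>v w)"
proof -
  have wc: "w \<in> carrier_vec n" using w by (rule carrier_vecI)
  have X: "P * M * Q \<in> carrier_mat n n" by (rule mult_carrier_mat[OF mult_carrier_mat[OF P M] Q])
  have "(P * M * Q) *\<^sub>v (P *\<^sub>v w) = (P * M * Q * P) *\<^sub>v w"
    by (rule assoc_mult_mat_vec[OF X P wc, symmetric])
  also have "P * M * Q * P = P * M * (Q * P)"
    by (rule assoc_mult_mat[OF mult_carrier_mat[OF P M] Q P])
  also have "\<dots> = P * M" unfolding QP by (rule right_mult_one_mat[OF mult_carrier_mat[OF P M]])
  also have "(P * M) *\<^sub>v w = P *\<^sub>v (M *\<^sub>v w)"
    by (rule assoc_mult_mat_vec[OF P M wc])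
  finally show ?thesis .
qed

lemma core_conj:
  fixes M P Q :: "'a::real_normed_field mat"
  assumes P: "P \<in> carrier_mat n n" and Q: "Q \<in> carrier_mat n n" and M: "M \<in> carrier_mat n n"
    and QP: "Q * P = 1\<^sub>m n" and PQ: "P * Q = 1\<^sub>m n" and z1: "dim_vec z1 = n"
    and zs: "\<And>m. dim_vec (zs m) = n" and i: "i < n"
  shows "((P * M * Q) *\<^sub>v (P *\<^sub>v z1)) $ i +
      (\<Sum>m = 2..s. c m * ((P * M * Q) ^\<^sub>m m *\<^sub>v (P *\<^sub>v zs m)) $ i) =
    (\<Sum>j<n. P $$ (i, j) * ((M *\<^sub>v z1) $ j + (\<Sum>m = 2..s. c m * (M ^\<^sub>m m *\<^sub>v zs m) $ j)))"
proof -
  have A: "((P * M * Q) *\<^sub>v (P *\<^sub>v z1)) $ i = (\<Sum>j<n. P $$ (i, j) * (M *\<^sub>v z1) $ j)"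
    using conj_one[OF P Q M QP PQ z1] mv_index[OF P _ i] M by simp
  have B: "((P * M * Q) ^\<^sub>m m *\<^sub>v (P *\<^sub>v zs m)) $ i = (\<Sum>j<n. P $$ (i, j) * (M ^\<^sub>m m *\<^sub>v zs m) $ j)" for m
    using conj_pow[OF P Q M QP PQ zs] mv_index[OF P _ i] M by simp
  have "(\<Sum>m = 2..s. c m * ((P * M * Q) ^\<^sub>m m *\<^sub>v (P *\<^sub>v zs m)) $ i) =
     (\<Sum>m = 2..s. \<Sum>j<n. P $$ (i, j) * (c m * (M ^\<^sub>m m *\<^sub>v zs m) $ j))"
    by (simp add: B sum_distrib_left mult.left_commute)
  also have "\<dots> = (\<Sum>j<n. \<Sum>m = 2..s. P $$ (i, j) * (c m * (M ^\<^sub>m m *\<^sub>v zs m) $ j))"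
    by (rule sum.swap)
  finally show ?thesis using A by (simp add: distrib_left sum.distrib sum_distrib_left)
qed

lemma lhs_conj:
  fixes P :: "'a::real_normed_field mat"
  assumes P: "P \<in> carrier_mat n n" and x: "dim_vec x = n" and y: "dim_vec y = n" and i: "i < n"
  shows "lhsf psi phi (P *\<^sub>v x) (P *\<^sub>v y) i = (\<Sum>j<n. P $$ (i, j) * lhsf psi phi x y j)"
  unfolding lhsf_def mv_index[OF P x i] mv_index[OF P y i]
  by (simp add: sum_divide_distrib[symmetric] sum_distrib_left sum_subtractf[symmetric] algebra_simps)

lemma rhs_conj:
  fixes M P Q :: "'a::real_normed_field mat"
  assumes P: "P \<in> carrier_mat n n" and Q: "Q \<in> carrier_mat n n" and M: "M \<in> carrier_mat n n"
    and QP: "Q * P = 1\<^sub>m n" and PQ: "P * Q = 1\<^sub>m n" and x: "dim_vec x = n" and y: "dim_vec y = n"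
    and i: "i < n"
  shows "rhsf S s al th phi (P * M * Q) (P *\<^sub>v x) (P *\<^sub>v y) i =
    (\<Sum>j<n. P $$ (i, j) * rhsf S s al th phi M x y j)"
proof (cases S)
  case S1
  then show ?thesis unfolding rhsf_def
    using core_conj[OF P Q M QP PQ x _ i, of "\<lambda>m. x"] x by simp
next
  case S2
  then show ?thesis unfolding rhsf_def
    using core_conj[OF P Q M QP PQ y _ i, of "\<lambda>m. y"] y by simp
next
  case S3
  have xc: "x \<in> carrier_vec n" and yc: "y \<in> carrier_vec n" using carrier_vecI[OF x] carrier_vecI[OF y] by auto
  have eq: "of_real a \<cdot>\<^sub>v (P *\<^sub>v x) + of_real b \<cdot>\<^sub>v (P *\<^sub>v y) = P *\<^sub>v (of_real a \<cdot>\<^sub>v x + of_real b \<cdot>\<^sub>v y)" for a b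
    using P xc yc by (simp add: mult_add_distrib_mat_vec mult_mat_vec)
  show ?thesis using S3 unfolding rhsf_def eq
    using core_conj[OF P Q M QP PQ _ _ i, of "of_real (th 1) \<cdot>\<^sub>v x + of_real (1 - th 1) \<cdot>\<^sub>v y"
        "\<lambda>m. of_real (th m) \<cdot>\<^sub>v x + of_real (1 - th m) \<cdot>\<^sub>v y"] x y by simp
qed

lemma step_conj:
  fixes M P Q :: "'a::real_normed_field mat"
  assumes P: "P \<in> carrier_mat n n" and Q: "Q \<in> carrier_mat n n" and M: "M \<in> carrier_mat n n"
    and QP: "Q * P = 1\<^sub>m n" and PQ: "P * Q = 1\<^sub>m n" and x: "dim_vec x = n"
    and st: "scheme_step S n psi phi s al th M x y"
  shows "scheme_step S n psi phi s al th (P * M * Q) (P *\<^sub>v x) (P *\<^sub>v y)"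
proof -
  from st have y: "dim_vec y = n" and eq: "\<And>i. i < n \<Longrightarrow> lhsf psi phi x y i = rhsf S s al th phi M x y i"
    unfolding step_iff by auto
  show ?thesis unfolding step_iff
  proof (intro conjI allI impI)
    show "dim_vec (P *\<^sub>v y) = n" using P by simp
    fix i assume i: "i < n"
    show "lhsf psi phi (P *\<^sub>v x) (P *\<^sub>v y) i = rhsf S s al th phi (P * M * Q) (P *\<^sub>v x) (P *\<^sub>v y) i"
      unfolding lhs_conj[OF P x y i] rhs_conj[OF P Q M QP PQ x y i]
      by (rule sum.cong, simp_all add: eq)
  qed
qed

lemma ode_conj:
  fixes M P Q :: "'a::real_normed_field mat"
  assumes P: "P \<in> carrier_mat n n" and Q: "Q \<in> carrier_mat n n" and M: "M \<in> carrier_mat n n"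
    and QP: "Q * P = 1\<^sub>m n" and PQ: "P * Q = 1\<^sub>m n"
    and sol: "ode_solution n M x0 u"
  shows "ode_solution n (P * M * Q) (P *\<^sub>v x0) (\<lambda>t. P *\<^sub>v u t)"
proof -
  from sol have u0: "u 0 = x0" and du: "\<And>t. dim_vec (u t) = n"
    and der: "\<And>t i. i < n \<Longrightarrow> ((\<lambda>t. u t $ i) has_vector_derivative (M *\<^sub>v u t) $ i) (at t)"
    unfolding ode_solution_def by auto
  show ?thesis unfolding ode_solution_def
  proof (intro conjI allI impI)
    show "P *\<^sub>v u 0 = P *\<^sub>v x0" using u0 by simp
    fix t
    show "dim_vec (P *\<^sub>v u t) = n" using P by simp
    fix i assume i: "i < n"
    have f: "(\<lambda>t. (P *\<^sub>v u t) $ i) = (\<lambda>t. \<Sum>j<n. P $$ (i, j) * u t $ j)"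
      using mv_index[OF P du i] by simp
    have v: "((P * M * Q) *\<^sub>v (P *\<^sub>v u t)) $ i = (\<Sum>j<n. P $$ (i, j) * (M *\<^sub>v u t) $ j)"
      using conj_one[OF P Q M QP PQ du] mv_index[OF P _ i] M by simp
    show "((\<lambda>t. (P *\<^sub>v u t) $ i) has_vector_derivative ((P * M * Q) *\<^sub>v (P *\<^sub>v u t)) $ i) (at t)"
      unfolding f v
      by (intro has_vector_derivative_sum has_vector_derivative_mult_right der) simp
  qed
qed

lemma hv:
  fixes B :: "real mat"
  assumes "B \<in> carrier_mat n n" "dim_vec z = n" "i < n"
  shows "(map_mat complex_of_real B *\<^sub>v map_vec complex_of_real z) $ i = complex_of_real ((B *\<^sub>v z) $ i)"
proof -
  have "map_vec complex_of_real (B *\<^sub>v z) = map_mat complex_of_real B *\<^sub>v map_vec complex_of_real z"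
    by (rule of_real_hom.mult_mat_vec_hom[OF assms(1) carrier_vecI[OF assms(2)]])
  then show ?thesis using assms by (metis dim_mult_mat_vec carrier_matD(1) index_map_vec(1))
qed

lemma vlin:
  fixes x y :: "real vec"
  assumes "dim_vec x = n" "dim_vec y = n"
  shows "complex_of_real a \<cdot>\<^sub>v map_vec complex_of_real x + complex_of_real b \<cdot>\<^sub>v map_vec complex_of_real y
    = map_vec complex_of_real (of_real a \<cdot>\<^sub>v x + of_real b \<cdot>\<^sub>v y)"
  using assms by (intro eq_vecI) auto

lemma real_step:
  fixes A :: "real mat"
  assumes A: "A \<in> carrier_mat n n" and x: "dim_vec x = n"
  shows "scheme_step S n psi phi s al th (map_mat complex_of_real A) (map_vec complex_of_real x) (map_vec complex_of_real y)
     \<longleftrightarrow> scheme_step S n psi phi s al th A x y"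
proof (cases "dim_vec y = n")
  case False then show ?thesis unfolding step_iff by simp
next
  case y: True
  have pw: "map_mat complex_of_real A ^\<^sub>m m = map_mat complex_of_real (A ^\<^sub>m m)" for m
    by (rule of_real_hom.mat_hom_pow[OF A, symmetric])
  have Am: "A ^\<^sub>m m \<in> carrier_mat n n" for m using A by (rule pow_carrier_mat)
  have L: "lhsf psi phi (map_vec complex_of_real x) (map_vec complex_of_real y) i = complex_of_real (lhsf psi phi x y i)"
    if i: "i < n" for i
    using i x y by (simp add: lhsf_def)
  have R: "rhsf S s al th phi (map_mat complex_of_real A) (map_vec complex_of_real x) (map_vec complex_of_real y) i
      = complex_of_real (rhsf S s al th phi A x y i)" if i: "i < n" for i
    using i x y A
    by (cases S) (simp_all add: rhsf_def pw vlin[OF x y] hv[OF A _ i] hv[OF Am _ i] del: index_mult_mat_vec of_real_diff)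
  show ?thesis unfolding step_iff using L R y by simp
qed

lemma re_mv:
  fixes B :: "real mat"
  assumes B: "B \<in> carrier_mat n n" and w: "dim_vec w = n" and i: "i < n"
  shows "Re ((map_mat complex_of_real B *\<^sub>v w) $ i) = (B *\<^sub>v map_vec Re w) $ i"
proof -
  have "(map_mat complex_of_real B *\<^sub>v w) $ i = (\<Sum>j<n. complex_of_real (B $$ (i, j)) * w $ j)"
    using mv_index[of "map_mat complex_of_real B" n w i] B w i by simp
  moreover have "(B *\<^sub>v map_vec Re w) $ i = (\<Sum>j<n. B $$ (i, j) * Re (w $ j))"
    using mv_index[OF B _ i, of "map_vec Re w"] w by simp
  ultimately show ?thesis by (simp add: Re_sum)
qed

lemma re_cv: "map_vec Re (map_vec complex_of_real x) = x"
  by (intro eq_vecI) auto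

lemma re_lin:
  fixes x :: "real vec" and y :: "complex vec"
  assumes "dim_vec x = n" "dim_vec y = n"
  shows "map_vec Re (complex_of_real a \<cdot>\<^sub>v map_vec complex_of_real x + complex_of_real b \<cdot>\<^sub>v y)
    = of_real a \<cdot>\<^sub>v x + of_real b \<cdot>\<^sub>v map_vec Re y"
  using assms by (intro eq_vecI) auto

lemma real_exists:
  fixes A :: "real mat"
  assumes A: "A \<in> carrier_mat n n" and x: "dim_vec x = n"
    and st: "scheme_step S n psi phi s al th (map_mat complex_of_real A) (map_vec complex_of_real x) yc"
  shows "scheme_step S n psi phi s al th A x (map_vec Re yc)"
proof -
  from st have y: "dim_vec yc = n" and eq: "\<And>i. i < n \<Longrightarrow>
     lhsf psi phi (map_vec complex_of_real x) yc i = rhsf S s al th phi (map_mat complex_of_real A) (map_vec complex_of_real x) yc i"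
    unfolding step_iff by auto
  have pw: "map_mat complex_of_real A ^\<^sub>m m = map_mat complex_of_real (A ^\<^sub>m m)" for m
    by (rule of_real_hom.mat_hom_pow[OF A, symmetric])
  have Am: "A ^\<^sub>m m \<in> carrier_mat n n" for m using A by (rule pow_carrier_mat)
  have L: "Re (lhsf psi phi (map_vec complex_of_real x) yc i) = lhsf psi phi x (map_vec Re yc) i"
    if i: "i < n" for i
    using i x y by (simp add: lhsf_def Re_divide_of_real)
  have R: "Re (rhsf S s al th phi (map_mat complex_of_real A) (map_vec complex_of_real x) yc i)
      = rhsf S s al th phi A x (map_vec Re yc) i" if i: "i < n" for i
    using i x y A
    by (cases S) (simp_all add: rhsf_def pw Re_sum re_mv[OF A _ i] re_mv[OF Am _ i] re_lin[OF x y] re_cv del: index_mult_mat_vec of_real_diff)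
  show ?thesis unfolding step_iff using L R y eq by (metis index_map_vec(2))
qed

lemma real_ode:
  fixes A :: "real mat"
  assumes A: "A \<in> carrier_mat n n" and sol: "ode_solution n A x0 u"
  shows "ode_solution n (map_mat complex_of_real A) (map_vec complex_of_real x0) (\<lambda>t. map_vec complex_of_real (u t))"
proof -
  from sol have u0: "u 0 = x0" and du: "\<And>t. dim_vec (u t) = n"
    and der: "\<And>t i. i < n \<Longrightarrow> ((\<lambda>t. u t $ i) has_vector_derivative (A *\<^sub>v u t) $ i) (at t)"
    unfolding ode_solution_def by auto
  show ?thesis unfolding ode_solution_def
  proof (intro conjI allI impI)
    show "map_vec complex_of_real (u 0) = map_vec complex_of_real x0" using u0 by simp
    fix t
    show "dim_vec (map_vec complex_of_real (u t)) = n" using du by simp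
    fix i assume i: "i < n"
    have f: "(\<lambda>t. map_vec complex_of_real (u t) $ i) = (\<lambda>t. complex_of_real (u t $ i))"
      using du i by simp
    have d: "((\<lambda>t. u t $ i) has_real_derivative (A *\<^sub>v u t) $ i) (at t)"
      using der[OF i] by (simp add: has_real_derivative_iff_has_vector_derivative)
    show "((\<lambda>t. map_vec complex_of_real (u t) $ i) has_vector_derivative
        (map_mat complex_of_real A *\<^sub>v map_vec complex_of_real (u t)) $ i) (at t)"
      unfolding f hv[OF A du i] by (rule has_vector_derivative_of_real[OF d])
  qed
qed

theorem theorem3:
  fixes A :: "real mat" and J :: "complex mat" and n_as :: "(nat \<times> complex) list"
    and h psi phi :: real and s n :: nat and al th :: "nat \<Rightarrow> real" and S :: scheme
  assumes "A \<in> carrier_mat n n"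
    and "jordan_nf (map_mat complex_of_real A) n_as"
    and "J = jordan_matrix n_as"
    and "h > 0"
    and "s \<ge> 2"
    and "exact_scheme S n psi phi s al th h J"
  shows "exact_scheme S n psi phi s al th h A"
proof -
  note A = assms(1)
  define ac where "ac = map_mat complex_of_real A"
  define cv where "cv = (\<lambda>x :: real vec. map_vec complex_of_real x)"
  have acc: "ac \<in> carrier_mat n n" using A by (simp add: ac_def)
  from assms(2,3) obtain P Q where wit: "similar_mat_wit ac J P Q"
    unfolding jordan_nf_def similar_mat_def ac_def by auto
  have dr: "dim_row ac = n" using acc by simp
  have W: "{ac, J, P, Q} \<subseteq> carrier_mat n n \<and> P * Q = 1\<^sub>m n \<and> Q * P = 1\<^sub>m n \<and> ac = P * J * Q"
    using wit unfolding similar_mat_wit_def Let_def dr by blast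
  then have P: "P \<in> carrier_mat n n" and Q: "Q \<in> carrier_mat n n" and Jc: "J \<in> carrier_mat n n"
    and PQ: "P * Q = 1\<^sub>m n" and QP: "Q * P = 1\<^sub>m n" and acJ: "ac = P * J * Q"
    by blast+
  have Jac: "J = Q * ac * P"
    using similar_mat_wit_sym[OF wit] unfolding similar_mat_wit_def Let_def by blast
  have PQv: "P *\<^sub>v (Q *\<^sub>v v) = v" if "dim_vec v = n" for v
  proof -
    have "P *\<^sub>v (Q *\<^sub>v v) = (P * Q) *\<^sub>v v"
      using P Q carrier_vecI[OF that] by (simp add: assoc_mult_mat_vec)
    then show ?thesis using PQ carrier_vecI[OF that] by simp
  qed
  have QPv: "Q *\<^sub>v (P *\<^sub>v v) = v" if "dim_vec v = n" for v
  proof -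
    have "Q *\<^sub>v (P *\<^sub>v v) = (Q * P) *\<^sub>v v"
      using P Q carrier_vecI[OF that] by (simp add: assoc_mult_mat_vec)
    then show ?thesis using QP carrier_vecI[OF that] by simp
  qed
  from assms(6) have exJ1: "\<And>x. dim_vec x = n \<Longrightarrow> \<exists>!y. scheme_step S n psi phi s al th J x y"
    and exJ2: "\<And>v u k. dim_vec (v 0) = n \<Longrightarrow> (\<forall>k. scheme_step S n psi phi s al th J (v k) (v (Suc k))) \<Longrightarrow>
        ode_solution n J (v 0) u \<Longrightarrow> v k = u (real k * h)"
    unfolding exact_scheme_def by blast+
  have toJ: "scheme_step S n psi phi s al th J (Q *\<^sub>v x) (Q *\<^sub>v y)"
    if "dim_vec x = n" "scheme_step S n psi phi s al th ac x y" for x y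
    unfolding Jac by (rule step_conj[OF Q P acc PQ QP that])
  have toac: "scheme_step S n psi phi s al th ac (P *\<^sub>v x) (P *\<^sub>v y)"
    if "dim_vec x = n" "scheme_step S n psi phi s al th J x y" for x y
    unfolding acJ by (rule step_conj[OF P Q Jc QP PQ that])
  have part1: "\<exists>!y. scheme_step S n psi phi s al th A x y" if x: "dim_vec x = n" for x
  proof -
    have dcx: "dim_vec (cv x) = n" using x by (simp add: cv_def)
    have dqx: "dim_vec (Q *\<^sub>v cv x) = n" using Q by simp
    obtain y' where y': "scheme_step S n psi phi s al th J (Q *\<^sub>v cv x) y'"
      and uq: "\<And>z. scheme_step S n psi phi s al th J (Q *\<^sub>v cv x) z \<Longrightarrow> z = y'"
      using exJ1[OF dqx] by blast
    have yc: "scheme_step S n psi phi s al th ac (cv x) (P *\<^sub>v y')"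
      using toac[OF dqx y'] PQv[OF dcx] by simp
    have cuniq: "z = P *\<^sub>v y'" if z: "scheme_step S n psi phi s al th ac (cv x) z" for z
    proof -
      have dz: "dim_vec z = n" using z unfolding step_iff by simp
      have "Q *\<^sub>v z = y'" using uq[OF toJ[OF dcx z]] .
      then show ?thesis using PQv[OF dz] by metis
    qed
    have ex: "scheme_step S n psi phi s al th A x (map_vec Re (P *\<^sub>v y'))"
      using real_exists[OF A x] yc unfolding ac_def cv_def by blast
    show ?thesis
    proof (rule ex1I[where a = "map_vec Re (P *\<^sub>v y')"])
      show "scheme_step S n psi phi s al th A x (map_vec Re (P *\<^sub>v y'))" by (rule ex)
      fix y assume y: "scheme_step S n psi phi s al th A x y"
      have "scheme_step S n psi phi s al th ac (cv x) (cv y)"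
        using real_step[OF A x] y unfolding ac_def cv_def by blast
      then have "cv y = P *\<^sub>v y'" by (rule cuniq)
      then show "y = map_vec Re (P *\<^sub>v y')" unfolding cv_def by (metis re_cv)
    qed
  qed
  show ?thesis unfolding exact_scheme_def
  proof (intro conjI allI impI)
    fix x :: "real vec" assume "dim_vec x = n" then show "\<exists>!y. scheme_step S n psi phi s al th A x y"
      by (rule part1)
  next
    fix v :: "nat \<Rightarrow> real vec" and u and k
    assume H: "dim_vec (v 0) = n \<and> (\<forall>k. scheme_step S n psi phi s al th A (v k) (v (Suc k)))"
      and sol: "ode_solution n A (v 0) u"
    have dv: "dim_vec (v k) = n" for k
    proof (cases k)
      case 0 then show ?thesis using H by simp
    next
      case (Suc k') then show ?thesis using H unfolding step_iff by blast
    qed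
    have dcv: "dim_vec (cv (v k)) = n" for k using dv by (simp add: cv_def)
    define w where "w = (\<lambda>k. Q *\<^sub>v cv (v k))"
    have wst: "\<forall>k. scheme_step S n psi phi s al th J (w k) (w (Suc k))"
    proof
      fix k
      have "scheme_step S n psi phi s al th ac (cv (v k)) (cv (v (Suc k)))"
        using real_step[OF A dv[of k]] H unfolding ac_def cv_def by blast
      then show "scheme_step S n psi phi s al th J (w k) (w (Suc k))"
        unfolding w_def by (rule toJ[OF dcv])
    qed
    have dw0: "dim_vec (w 0) = n" unfolding w_def using Q by simp
    have usol: "ode_solution n ac (cv (v 0)) (\<lambda>t. cv (u t))"
      using real_ode[OF A sol] unfolding ac_def cv_def .
    have Usol: "ode_solution n J (w 0) (\<lambda>t. Q *\<^sub>v cv (u t))"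
      unfolding w_def Jac by (rule ode_conj[OF Q P acc PQ QP usol])
    have du: "dim_vec (cv (u t)) = n" for t
      using sol unfolding ode_solution_def cv_def by simp
    have "w k = Q *\<^sub>v cv (u (real k * h))"
      by (rule exJ2[OF dw0 wst Usol])
    then have "P *\<^sub>v w k = P *\<^sub>v (Q *\<^sub>v cv (u (real k * h)))" by simp
    then have "cv (v k) = cv (u (real k * h))"
      unfolding w_def PQv[OF dcv] PQv[OF du] .
    then show "v k = u (real k * h)" unfolding cv_def by (rule of_real_hom.vec_hom_inj)
  qed
qed

end
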